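(* Let $\mathcal B$ be a BMC with $\mathbf c^*_q<\infty$ for all $q\in\mathcal T$, and consider the Q-learning process with learning rates $\lambda_i\in[0,1]$, a fixed selection distribution $(p_q)_{q\in\mathcal T}$, and initial value $Q_0=\kappa\mathbf c^*$ for a scalar $\kappa\in[0,1]$. Then for all $i\in\mathbb N$, $\mathbf c^*\ge T(\mathbb E Q_i)\ge \mathbb E Q_{i+1}\ge\mathbb E Q_i$.
   Context: A branching Markov chain (BMC) is $\mathcal B=(\mathcal T,p,c)$ with $\mathcal T$ a finite set of types, $p(q)$ for each $q\in\mathcal T$ a probability distribution with finite support over finite lists $\mathcal T^*$ of types (the offspring distribution), and $c:\mathcal T\to\mathbb R_{>0}$ a strictly positive cost. (It is a BMDP with one action per type.) For a list $\alpha$, $|\alpha|$ is its length and $\alpha_i$ its $i$-th element. Its process: a list of entities; repeatedly some entity of type $q$ is replaced by a list $\beta$ drawn from $p(q)$, incurring cost $c(q)$, until the list is empty. $\mathbf c^*_q\in[0,\infty]$ denotes the expected total cost until extinction starting from the single entity $q$; equivalently $\mathbf c^*$ is the least fixed point in $[0,\infty]^{\mathcal T}$ of $F(\mathbf x)_q=c(q)+\sum_\alpha p(q)(\alpha)\sum_{i=1}^{|\alpha|}\mathbf x_{\alpha_i}$. Q-values for a BMC are vectors $Q\in\mathbb R_{\ge0}^{\mathcal T}$. The target operator is $T(Q)(q)=c(q)+\sum_{\alpha\in\mathcal T^*}p(q)(\alpha)\sum_{j=1}^{|\alpha|}Q(\alpha_j)$ (an affine map $T(Q)=BQ+\mathbf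 c$ with $B$ a nonnegative matrix). Q-learning process: given deterministic learning rates $\lambda_i\in[0,1]$, a probability distribution $(p_q)_{q\in\mathcal T}$ and an initial vector $Q_0\ge\mathbf 0$, at each step $i=0,1,2,\dots$ a type $q_i$ is selected with probability $p_{q_i}$ independently of all previous randomness, then a list $\beta^i$ is drawn from $p(q_i)$ independently, and $Q_{i+1}(q_i)=(1-\lambda_i)Q_i(q_i)+\lambda_i\big(c(q_i)+\sum_{j=1}^{|\beta^i|}Q_i(\beta^i_j)\big)$, while $Q_{i+1}(q)=Q_i(q)$ for $q\ne q_i$. $\mathbb E Q_i$ is the componentwise expectation; inequalities between vectors are componentwise. *)

theory Defs
  imports "HOL-Probability.Probability"
begin

text \<open>A BMC over a finite type of types 'q: offspring distribution p :: 'q => 'q list pmf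
  (finite support assumed in the theorem), cost c :: 'q => real (positive, assumed).\<close>

definition bmc_F :: "('q \<Rightarrow> 'q list pmf) \<Rightarrow> ('q \<Rightarrow> real) \<Rightarrow> ('q \<Rightarrow> ennreal) \<Rightarrow> ('q \<Rightarrow> ennreal)" where
  "bmc_F p c x = (\<lambda>q. ennreal (c q) +
      (\<Sum>\<alpha>\<in>set_pmf (p q). ennreal (pmf (p q) \<alpha>) * (\<Sum>i<length \<alpha>. x (\<alpha> ! i))))"

text \<open>Expected total cost until extinction: least fixed point of F.\<close>
definition cstar :: "('q \<Rightarrow> 'q list pmf) \<Rightarrow> ('q \<Rightarrow> real) \<Rightarrow> 'q \<Rightarrow> ennreal" where
  "cstar p c = lfp (bmc_F p c)"

definition target_op :: "('q \<Rightarrow> 'q list pmf) \<Rightarrow> ('q \<Rightarrow> real) \<Rightarrow> ('q \<Rightarrow> real) \<Rightarrow> ('q \<Rightarrow> real)" where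
  "target_op p c Q = (\<lambda>q. c q +
      (\<Sum>\<alpha>\<in>set_pmf (p q). pmf (p q) \<alpha> * (\<Sum>j<length \<alpha>. Q (\<alpha> ! j))))"

definition q_update :: "('q \<Rightarrow> real) \<Rightarrow> (nat \<Rightarrow> real) \<Rightarrow> nat \<Rightarrow> ('q \<Rightarrow> real) \<Rightarrow> 'q \<Rightarrow> 'q list \<Rightarrow> ('q \<Rightarrow> real)" where
  "q_update c lr i Q q \<beta> =
     Q(q := (1 - lr i) * Q q + lr i * (c q + (\<Sum>j<length \<beta>. Q (\<beta> ! j))))"

primrec qlearn_dist :: "('q \<Rightarrow> 'q list pmf) \<Rightarrow> ('q \<Rightarrow> real) \<Rightarrow> (nat \<Rightarrow> real) \<Rightarrow> 'q pmf
    \<Rightarrow> ('q \<Rightarrow> real) \<Rightarrow> nat \<Rightarrow> ('q \<Rightarrow> real) pmf" where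
  "qlearn_dist p c lr sel Q0 0 = return_pmf Q0"
| "qlearn_dist p c lr sel Q0 (Suc i) =
     bind_pmf (qlearn_dist p c lr sel Q0 i) (\<lambda>Q.
       bind_pmf sel (\<lambda>q. map_pmf (\<lambda>\<beta>. q_update c lr i Q q \<beta>) (p q)))"

definition expQ :: "('q \<Rightarrow> 'q list pmf) \<Rightarrow> ('q \<Rightarrow> real) \<Rightarrow> (nat \<Rightarrow> real) \<Rightarrow> 'q pmf
    \<Rightarrow> ('q \<Rightarrow> real) \<Rightarrow> nat \<Rightarrow> ('q \<Rightarrow> real)" where
  "expQ p c lr sel Q0 i = (\<lambda>q. measure_pmf.expectation (qlearn_dist p c lr sel Q0 i) (\<lambda>Q. Q q))"

end

theory Submission
  imports Defs
begin

lemma bmc_F_mono: "mono (bmc_F p c)"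
  unfolding bmc_F_def
  by (intro monoI le_funI add_left_mono sum_mono mult_left_mono) (auto simp: le_fun_def)

lemma target_mono:
  assumes "\<And>r. x r \<le> y r"
  shows "target_op p c x q \<le> target_op p c y q"
  unfolding target_op_def
  by (intro add_left_mono sum_mono mult_left_mono) (auto simp: assms)

lemma cstar_fix:
  assumes fin: "\<And>q. finite (set_pmf (p q))" and cpos: "\<And>q. c q > 0"
    and cf: "\<And>q. cstar p c q < \<infinity>"
  shows "target_op p c (\<lambda>q. enn2real (cstar p c q)) q = enn2real (cstar p c q)"
proof -
  define C where "C = (\<lambda>q. enn2real (cstar p c q))"
  have Cn: "\<And>r. 0 \<le> C r" by (simp add: C_def)
  have cs: "\<And>r. cstar p c r = ennreal (C r)"
    using cf by (simp add: C_def ennreal_enn2real_if less_top[symmetric])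
  have "cstar p c = bmc_F p c (cstar p c)"
    unfolding cstar_def by (rule lfp_unfold[OF bmc_F_mono])
  hence "cstar p c q = bmc_F p c (cstar p c) q" by simp
  also have "\<dots> = ennreal (c q) + (\<Sum>\<alpha>\<in>set_pmf (p q). ennreal (pmf (p q) \<alpha>) * ennreal (\<Sum>i<length \<alpha>. C (\<alpha> ! i)))"
    unfolding bmc_F_def cs by (subst sum_ennreal) (auto simp: Cn)
  also have "\<dots> = ennreal (target_op p c C q)"
  proof -
    have "(\<Sum>\<alpha>\<in>set_pmf (p q). ennreal (pmf (p q) \<alpha>) * ennreal (\<Sum>i<length \<alpha>. C (\<alpha> ! i)))
        = (\<Sum>\<alpha>\<in>set_pmf (p q). ennreal (pmf (p q) \<alpha> * (\<Sum>i<length \<alpha>. C (\<alpha> ! i))))"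
      by (intro sum.cong refl, subst ennreal_mult) (auto intro: sum_nonneg simp: Cn)
    also have "\<dots> = ennreal (\<Sum>\<alpha>\<in>set_pmf (p q). pmf (p q) \<alpha> * (\<Sum>i<length \<alpha>. C (\<alpha> ! i)))"
      by (simp add: Cn sum_nonneg)
    finally show ?thesis unfolding target_op_def using cpos[of q]
      by (subst ennreal_plus) (auto intro!: sum_nonneg mult_nonneg_nonneg simp: Cn)
  qed
  finally have "ennreal (C q) = ennreal (target_op p c C q)" using cs by simp
  moreover have "0 \<le> target_op p c C q"
    unfolding target_op_def using cpos[of q]
    by (intro add_nonneg_nonneg sum_nonneg mult_nonneg_nonneg) (auto simp: Cn less_imp_le)
  ultimately have "C q = target_op p c C q" using Cn by simp
  thus ?thesis by (simp add: C_def)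
qed

lemma finite_qlearn:
  fixes p :: "'q::finite \<Rightarrow> 'q list pmf"
  assumes fin: "\<And>q. finite (set_pmf (p q))"
  shows "finite (set_pmf (qlearn_dist p c lr sel Q0 i))"
  by (induction i) (auto simp: fin)

lemma inner_exp:
  fixes p :: "'q::finite \<Rightarrow> 'q list pmf"
  assumes fin: "\<And>q. finite (set_pmf (p q))"
  shows "measure_pmf.expectation (bind_pmf sel (\<lambda>s. map_pmf (\<lambda>\<beta>. q_update c lr i Q s \<beta>) (p s))) (\<lambda>Q'. Q' q)
     = Q q + pmf sel q * lr i * (target_op p c Q q - Q q)"
proof -
  have A: "measure_pmf.expectation (bind_pmf sel (\<lambda>s. map_pmf (\<lambda>\<beta>. q_update c lr i Q s \<beta>) (p s))) (\<lambda>Q'. Q' q)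
     = (\<Sum>s\<in>UNIV. pmf sel s *\<^sub>R measure_pmf.expectation (map_pmf (\<lambda>\<beta>. q_update c lr i Q s \<beta>) (p s)) (\<lambda>Q'. Q' q))"
    by (rule pmf_expectation_bind) (auto simp: fin)
  have B: "measure_pmf.expectation (map_pmf (\<lambda>\<beta>. q_update c lr i Q s \<beta>) (p s)) (\<lambda>Q'. Q' q)
      = (if s = q then Q q + lr i * (target_op p c Q q - Q q) else Q q)" for s
  proof -
    have "measure_pmf.expectation (map_pmf (\<lambda>\<beta>. q_update c lr i Q s \<beta>) (p s)) (\<lambda>Q'. Q' q)
       = (\<Sum>\<alpha>\<in>set_pmf (p s). pmf (p s) \<alpha> *\<^sub>R q_update c lr i Q s \<alpha> q)"
      by (subst integral_map_pmf, rule integral_measure_pmf) (auto simp: fin)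
    also have "\<dots> = (if s = q then Q q + lr i * (target_op p c Q q - Q q) else Q q)"
    proof (cases "s = q")
      case True
      have "(\<Sum>\<alpha>\<in>set_pmf (p s). pmf (p s) \<alpha> *\<^sub>R q_update c lr i Q s \<alpha> q)
          = (\<Sum>\<alpha>\<in>set_pmf (p q). pmf (p q) \<alpha> * ((1 - lr i) * Q q + lr i * c q)
               + lr i * (pmf (p q) \<alpha> * (\<Sum>j<length \<alpha>. Q (\<alpha> ! j))))"
        unfolding True by (intro sum.cong refl) (simp add: q_update_def algebra_simps)
      also have "\<dots> = (\<Sum>\<alpha>\<in>set_pmf (p q). pmf (p q) \<alpha>) * ((1 - lr i) * Q q + lr i * c q)
           + lr i * (\<Sum>\<alpha>\<in>set_pmf (p q). pmf (p q) \<alpha> * (\<Sum>j<length \<alpha>. Q (\<alpha> ! j)))"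
        by (subst sum.distrib) (simp only: sum_distrib_left[symmetric] sum_distrib_right[symmetric])
      also have "(\<Sum>\<alpha>\<in>set_pmf (p q). pmf (p q) \<alpha>) = 1"
        by (rule sum_pmf_eq_1) (auto simp: fin)
      finally show ?thesis using True by (simp add: target_op_def algebra_simps)
    next
      case False
      have "(\<Sum>\<alpha>\<in>set_pmf (p s). pmf (p s) \<alpha> *\<^sub>R q_update c lr i Q s \<alpha> q)
          = (\<Sum>\<alpha>\<in>set_pmf (p s). pmf (p s) \<alpha>) * Q q"
        using False by (simp add: q_update_def sum_distrib_right)
      also have "(\<Sum>\<alpha>\<in>set_pmf (p s). pmf (p s) \<alpha>) = 1"
        by (rule sum_pmf_eq_1) (auto simp: fin)
      finally show ?thesis using False by simp
    qed
    finally show ?thesis .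
  qed
  have "(\<Sum>s\<in>UNIV. pmf sel s *\<^sub>R measure_pmf.expectation (map_pmf (\<lambda>\<beta>. q_update c lr i Q s \<beta>) (p s)) (\<lambda>Q'. Q' q))
     = (\<Sum>s\<in>UNIV. pmf sel s * Q q + (if s = q then pmf sel q * lr i * (target_op p c Q q - Q q) else 0))"
    by (intro sum.cong refl, simp only: B) (auto simp: algebra_simps)
  also have "\<dots> = (\<Sum>s\<in>UNIV. pmf sel s) * Q q + pmf sel q * lr i * (target_op p c Q q - Q q)"
    by (simp add: sum.distrib sum_distrib_right)
  also have "(\<Sum>s\<in>UNIV. pmf sel s) = 1"
    by (rule sum_pmf_eq_1) auto
  finally show ?thesis using A by simp
qed

lemma target_lin:
  assumes S: "finite S" and one: "(\<Sum>Q\<in>S. w Q) = 1"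
  shows "target_op p c (\<lambda>r. \<Sum>Q\<in>S. w Q * Q r) q = (\<Sum>Q\<in>S. w Q * target_op p c Q q)"
proof -
  have "(\<Sum>Q\<in>S. w Q * target_op p c Q q) = (\<Sum>Q\<in>S. w Q) * c q +
     (\<Sum>Q\<in>S. w Q * (\<Sum>\<alpha>\<in>set_pmf (p q). pmf (p q) \<alpha> * (\<Sum>j<length \<alpha>. Q (\<alpha> ! j))))"
    by (simp add: target_op_def distrib_left sum.distrib sum_distrib_right)
  also have "(\<Sum>Q\<in>S. w Q * (\<Sum>\<alpha>\<in>set_pmf (p q). pmf (p q) \<alpha> * (\<Sum>j<length \<alpha>. Q (\<alpha> ! j))))
     = (\<Sum>\<alpha>\<in>set_pmf (p q). pmf (p q) \<alpha> * (\<Sum>j<length \<alpha>. \<Sum>Q\<in>S. w Q * Q (\<alpha> ! j)))"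
    by (simp add: sum_distrib_left sum.swap[of _ S] mult.left_commute)
  finally show ?thesis by (simp add: one target_op_def)
qed

lemma exp_step:
  fixes p :: "'q::finite \<Rightarrow> 'q list pmf"
  assumes fin: "\<And>q. finite (set_pmf (p q))"
  shows "expQ p c lr sel Q0 (Suc i) q = expQ p c lr sel Q0 i q
     + pmf sel q * lr i * (target_op p c (expQ p c lr sel Q0 i) q - expQ p c lr sel Q0 i q)"
proof -
  define D where "D = qlearn_dist p c lr sel Q0 i"
  define S where "S = set_pmf D"
  have S: "finite S" unfolding S_def D_def by (rule finite_qlearn[OF fin])
  have one: "(\<Sum>Q\<in>S. pmf D Q) = 1" using S unfolding S_def by (intro sum_pmf_eq_1) auto
  have E: "expQ p c lr sel Q0 i = (\<lambda>r. \<Sum>Q\<in>S. pmf D Q * Q r)"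
    unfolding expQ_def D_def[symmetric]
    by (rule ext, subst integral_measure_pmf[OF S]) (auto simp: S_def)
  have "expQ p c lr sel Q0 (Suc i) q = (\<Sum>Q\<in>S. pmf D Q *\<^sub>R
      measure_pmf.expectation (bind_pmf sel (\<lambda>s. map_pmf (\<lambda>\<beta>. q_update c lr i Q s \<beta>) (p s))) (\<lambda>Q'. Q' q))"
    unfolding expQ_def qlearn_dist.simps D_def[symmetric]
    by (rule pmf_expectation_bind) (auto simp: S[unfolded S_def] S_def fin)
  also have "\<dots> = (\<Sum>Q\<in>S. pmf D Q * (Q q + pmf sel q * lr i * (target_op p c Q q - Q q)))"
    by (simp add: inner_exp[OF fin])
  also have "\<dots> = (\<Sum>Q\<in>S. pmf D Q * Q q) + pmf sel q * lr i * ((\<Sum>Q\<in>S. pmf D Q * target_op p c Q q) - (\<Sum>Q\<in>S. pmf D Q * Q q))"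
    by (simp add: algebra_simps sum.distrib sum_distrib_left sum_subtractf)
  finally show ?thesis unfolding E target_lin[OF S one] .
qed

lemma between:
  fixes a b w l :: real
  assumes "a \<le> b" "0 \<le> w" "w \<le> 1" "0 \<le> l" "l \<le> 1"
  shows "a \<le> a + w * l * (b - a)" "a + w * l * (b - a) \<le> b"
proof -
  have wl: "0 \<le> w * l" "w * l \<le> 1" using assms by (auto intro: mult_le_one)
  show "a \<le> a + w * l * (b - a)" using wl assms by simp
  have "w * l * (b - a) \<le> 1 * (b - a)" using wl assms by (intro mult_right_mono) auto
  thus "a + w * l * (b - a) \<le> b" by simp
qed

theorem lemma2:
  fixes p :: "'q::finite \<Rightarrow> 'q list pmf" and c :: "'q \<Rightarrow> real"
    and lr :: "nat \<Rightarrow> real" and sel :: "'q pmf" and \<kappa> :: real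
  assumes fin_supp: "\<And>q. finite (set_pmf (p q))"
    and c_pos: "\<And>q. c q > 0"
    and cstar_fin: "\<And>q. cstar p c q < \<infinity>"
    and lr_range: "\<And>i. 0 \<le> lr i \<and> lr i \<le> 1"
    and \<kappa>_range: "0 \<le> \<kappa>" "\<kappa> \<le> 1"
  defines "Q0 \<equiv> (\<lambda>q. \<kappa> * enn2real (cstar p c q))"
  shows "(\<lambda>q. enn2real (cstar p c q)) \<ge> target_op p c (expQ p c lr sel Q0 i)
       \<and> target_op p c (expQ p c lr sel Q0 i) \<ge> expQ p c lr sel Q0 (Suc i)
       \<and> expQ p c lr sel Q0 (Suc i) \<ge> expQ p c lr sel Q0 i"
proof -
  define C where "C = (\<lambda>q. enn2real (cstar p c q))"
  define E where "E = expQ p c lr sel Q0"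
  define T where "T = target_op p c"
  have TC: "\<And>q. T C q = C q" unfolding T_def C_def by (rule cstar_fix[OF fin_supp c_pos cstar_fin])
  have Cn: "\<And>q. 0 \<le> C q" by (simp add: C_def)
  have Tm: "\<And>x y q. (\<And>r. x r \<le> y r) \<Longrightarrow> T x q \<le> T y q" unfolding T_def by (rule target_mono)
  have step: "\<And>i q. E (Suc i) q = E i q + pmf sel q * lr i * (T (E i) q - E i q)"
    unfolding E_def T_def by (rule exp_step[OF fin_supp])
  have btw: "\<And>i q. E i q \<le> T (E i) q \<Longrightarrow> E i q \<le> E (Suc i) q \<and> E (Suc i) q \<le> T (E i) q"
    unfolding step using lr_range by (intro conjI between) (auto simp: pmf_le_1)
  have inv: "\<forall>q. E i q \<le> T (E i) q \<and> T (E i) q \<le> C q" for i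
  proof (induction i)
    case 0
    have E0: "E 0 = Q0" by (simp add: E_def expQ_def)
    define X where "X = (\<lambda>q. \<Sum>\<alpha>\<in>set_pmf (p q). pmf (p q) \<alpha> * (\<Sum>j<length \<alpha>. C (\<alpha> ! j)))"
    have TQ0: "T Q0 q = c q + \<kappa> * X q" for q
      by (simp add: T_def target_op_def Q0_def X_def C_def sum_distrib_left mult.left_commute)
    have CX: "C q = c q + X q" for q using TC[of q] by (simp add: T_def target_op_def X_def)
    have QC: "Q0 q = \<kappa> * C q" for q by (simp add: Q0_def C_def)
    show ?case
    proof
      fix q
      have "\<kappa> * c q \<le> 1 * c q" using \<kappa>_range c_pos[of q] by (intro mult_right_mono) auto
      hence "E 0 q \<le> T (E 0) q" unfolding E0 TQ0 using CX[of q]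
        by (simp add: QC distrib_left)
      moreover have "T (E 0) q \<le> T C q" unfolding E0
      proof (rule Tm)
        fix r
        have "\<kappa> * C r \<le> 1 * C r" using \<kappa>_range Cn[of r] by (intro mult_right_mono) auto
        thus "Q0 r \<le> C r" by (simp add: Q0_def C_def)
      qed
      ultimately show "E 0 q \<le> T (E 0) q \<and> T (E 0) q \<le> C q" using TC by simp
    qed
  next
    case (Suc i)
    have b: "\<And>q. E i q \<le> E (Suc i) q \<and> E (Suc i) q \<le> T (E i) q" using Suc btw by blast
    show ?case
    proof
      fix q
      have "T (E i) q \<le> T (E (Suc i)) q" by (rule Tm) (use b in blast)
      moreover have "T (E (Suc i)) q \<le> T C q" by (rule Tm, meson b Suc order_trans)
      ultimately show "E (Suc i) q \<le> T (E (Suc i)) q \<and> T (E (Suc i)) q \<le> C q"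
        using b[of q] TC[of q] by linarith
    qed
  qed
  have "\<forall>q. T (E i) q \<le> C q \<and> E (Suc i) q \<le> T (E i) q \<and> E i q \<le> E (Suc i) q"
    using inv[of i] btw by blast
  thus ?thesis unfolding C_def[symmetric] E_def[symmetric] T_def[symmetric] by (auto simp: le_fun_def)
qed

end
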